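(* Let $[X,A]$ be a Banach space with an $i$-operator. Then $A\oplus(-A)$, $(x_1,x_2)\mapsto(Ax_1,-Ax_2)$, is an $i$-operator on $X\oplus X$ (normed e.g. by $\|(x_1,x_2)\|=\|x_1\|+\|x_2\|$), and in the category of Banach spaces with an $i$-operator $[X\oplus X,A\oplus -A]\simeq[X\oplus X,N_X]$.
   Context: A Banach space with an $i$-operator is a pair $[X,A]$ with $X$ a real Banach space and $A:X\to X$ bounded linear with $A^2=-I_X$ and $\|\alpha x+\beta Ax\|=\|x\|$ for all real $\alpha,\beta$ with $\alpha^2+\beta^2=1$. Two such spaces $[X,A]$, $[Y,B]$ are isomorphic ($\simeq$) if there is a bounded linear bijection $T:X\to Y$ with $TA=BT$. $N_X(x_1,x_2)=(-x_2,x_1)$, and $[X\oplus X,N_X]$ is the complexification of $X$, with norm $\|(x_1,x_2)\|=\left(\frac1{2\pi}\int_{-\pi}^{\pi}\|x_1\cos\phi+x_2\sin\phi\|^2d\phi\right)^{1/2}$. *)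

theory Defs
  imports "HOL-Analysis.Analysis"
begin

definition i_operator :: "('v::real_vector \<Rightarrow> real) \<Rightarrow> ('v \<Rightarrow> 'v) \<Rightarrow> bool" where
  "i_operator nrm A \<longleftrightarrow>
     linear A \<and> (\<exists>K. \<forall>x. nrm (A x) \<le> K * nrm x) \<and> (\<forall>x. A (A x) = - x) \<and>
     (\<forall>\<alpha> \<beta> x. \<alpha>\<^sup>2 + \<beta>\<^sup>2 = 1 \<longrightarrow> nrm (\<alpha> *\<^sub>R x + \<beta> *\<^sub>R A x) = nrm x)"

definition i_iso :: "('v::real_vector \<Rightarrow> real) \<Rightarrow> ('v \<Rightarrow> 'v) \<Rightarrow>
                     ('w::real_vector \<Rightarrow> real) \<Rightarrow> ('w \<Rightarrow> 'w) \<Rightarrow> bool" where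
  "i_iso nrm1 A nrm2 B \<longleftrightarrow>
     (\<exists>T. linear T \<and> bij T \<and> (\<exists>K. \<forall>x. nrm2 (T x) \<le> K * nrm1 x) \<and> (\<forall>x. T (A x) = B (T x)))"

definition sum_norm :: "'a::real_normed_vector \<times> 'a \<Rightarrow> real" where
  "sum_norm p = norm (fst p) + norm (snd p)"

definition cplx_norm :: "'a::real_normed_vector \<times> 'a \<Rightarrow> real" where
  "cplx_norm p = sqrt ((1 / (2 * pi)) *
      integral {-pi..pi} (\<lambda>\<phi>. (norm (cos \<phi> *\<^sub>R fst p + sin \<phi> *\<^sub>R snd p))\<^sup>2))"

definition N_op :: "'a::real_vector \<times> 'a \<Rightarrow> 'a \<times> 'a" where
  "N_op p = (- snd p, fst p)"

definition diag_op :: "('a::real_vector \<Rightarrow> 'a) \<Rightarrow> 'a \<times> 'a \<Rightarrow> 'a \<times> 'a" where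
  "diag_op A p = (A (fst p), - A (snd p))"

end

theory Submission
  imports Defs
begin

lemma cplx_bound:
  fixes a b :: "'a::real_normed_vector"
  shows "cplx_norm (a, b) \<le> norm a + norm b"
proof -
  let ?f = "\<lambda>\<phi>. (norm (cos \<phi> *\<^sub>R a + sin \<phi> *\<^sub>R b))\<^sup>2"
  have cont: "continuous_on {-pi..pi} ?f"
    by (intro continuous_intros)
  have int: "?f integrable_on {-pi..pi}"
    using cont integrable_continuous_interval by blast
  have pt: "?f x \<le> (norm a + norm b)\<^sup>2" for x
  proof -
    have "norm (cos x *\<^sub>R a + sin x *\<^sub>R b) \<le> \<bar>cos x\<bar> * norm a + \<bar>sin x\<bar> * norm b"
      by (metis norm_scaleR norm_triangle_ineq)
    also have "\<dots> \<le> norm a + norm b"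
      by (intro add_mono mult_left_le_one_le) auto
    finally show ?thesis by (intro power_mono) auto
  qed
  have "integral {-pi..pi} ?f \<le> integral {-pi..pi} (\<lambda>_. (norm a + norm b)\<^sup>2)"
    by (rule integral_le[OF int]) (auto simp: pt)
  also have "\<dots> = 2 * pi * (norm a + norm b)\<^sup>2"
    by simp
  finally have "(1 / (2 * pi)) * integral {-pi..pi} ?f \<le> (norm a + norm b)\<^sup>2"
    by (simp add: field_simps)
  then have "sqrt ((1 / (2 * pi)) * integral {-pi..pi} ?f) \<le> sqrt ((norm a + norm b)\<^sup>2)"
    using real_sqrt_le_mono by blast
  then show ?thesis unfolding cplx_norm_def by simp
qed

theorem proposition3:
  fixes A :: "'a::banach \<Rightarrow> 'a"
  assumes "i_operator norm A"
  shows "i_operator (sum_norm :: 'a \<times> 'a \<Rightarrow> real) (diag_op A)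
         \<and> i_iso (sum_norm :: 'a \<times> 'a \<Rightarrow> real) (diag_op A) (cplx_norm :: 'a \<times> 'a \<Rightarrow> real) N_op"
proof -
  have lin: "linear A" and AA: "\<And>x. A (A x) = - x"
    and circ: "\<And>\<alpha> \<beta> x. \<alpha>\<^sup>2 + \<beta>\<^sup>2 = 1 \<Longrightarrow> norm (\<alpha> *\<^sub>R x + \<beta> *\<^sub>R A x) = norm x"
    using assms unfolding i_operator_def by auto
  have Aadd: "A (x + y) = A x + A y" for x y using lin by (simp add: linear_add)
  have Asc: "A (c *\<^sub>R x) = c *\<^sub>R A x" for c x using lin by (simp add: linear_scale)
  have Aminus: "A (- x) = - A x" for x using lin by (simp add: linear_neg)
  have Adiff: "A (x - y) = A x - A y" for x y using lin by (simp add: linear_diff)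
  have nA: "norm (A x) = norm x" for x using circ[of 0 1 x] by simp
  have part1: "i_operator (sum_norm :: 'a \<times> 'a \<Rightarrow> real) (diag_op A)"
    unfolding i_operator_def
  proof (intro conjI allI impI)
    show "linear (diag_op A)"
      by (rule linearI) (auto simp: diag_op_def Aadd Asc)
    show "\<exists>K. \<forall>x. sum_norm (diag_op A x) \<le> K * sum_norm x"
      by (rule exI[of _ 1]) (simp add: sum_norm_def diag_op_def nA)
    show "diag_op A (diag_op A x) = - x" for x
      by (simp add: diag_op_def AA Aminus prod_eq_iff)
    fix \<alpha> \<beta> :: real and x :: "'a \<times> 'a"
    assume h: "\<alpha>\<^sup>2 + \<beta>\<^sup>2 = 1"
    have h2: "\<alpha>\<^sup>2 + (-\<beta>)\<^sup>2 = 1" using h by simp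
    have "norm (\<alpha> *\<^sub>R snd x - \<beta> *\<^sub>R A (snd x)) = norm (snd x)"
      using circ[OF h2, of "snd x"] by simp
    then show "sum_norm (\<alpha> *\<^sub>R x + \<beta> *\<^sub>R diag_op A x) = sum_norm x"
      using circ[OF h, of "fst x"]
      by (simp add: sum_norm_def diag_op_def)
  qed
  define T where "T = (\<lambda>p::'a\<times>'a. (fst p + snd p, A (snd p) - A (fst p)))"
  define S where "S = (\<lambda>p::'a\<times>'a. ((1/2) *\<^sub>R (fst p + A (snd p)), (1/2) *\<^sub>R (fst p - A (snd p))))"
  have half: "(1/2::real) *\<^sub>R x + (1/2::real) *\<^sub>R x = x" for x :: 'a
    by (simp add: scaleR_add_left[symmetric])
  have TS: "T (S p) = p" for p
  proof -
    have "fst (T (S p)) = fst p"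
      by (simp add: T_def S_def scaleR_add_right[symmetric] del: scaleR_add_right)
    moreover have "snd (T (S p)) = snd p"
      unfolding T_def S_def snd_conv fst_conv Asc Adiff Aadd AA
      by (simp add: scaleR_diff_right scaleR_add_right half)
    ultimately show ?thesis by (simp add: prod_eq_iff)
  qed
  have ST: "S (T p) = p" for p
  proof -
    have "fst (S (T p)) = fst p"
      unfolding T_def S_def snd_conv fst_conv Asc Adiff Aadd AA
      by (simp add: scaleR_diff_right scaleR_add_right half)
    moreover have "snd (S (T p)) = snd p"
      unfolding T_def S_def snd_conv fst_conv Asc Adiff Aadd AA
      by (simp add: scaleR_diff_right scaleR_add_right half)
    ultimately show ?thesis by (simp add: prod_eq_iff)
  qed
  have part2: "i_iso (sum_norm :: 'a \<times> 'a \<Rightarrow> real) (diag_op A) (cplx_norm :: 'a \<times> 'a \<Rightarrow> real) N_op"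
    unfolding i_iso_def
  proof (rule exI[of _ T], intro conjI)
    show "linear T"
      by (rule linearI) (auto simp: T_def Aadd Asc algebra_simps)
    show "bij T"
      by (metis ST TS bij_def inj_def surj_def)
    show "\<exists>K. \<forall>x. cplx_norm (T x) \<le> K * sum_norm x"
    proof (rule exI[of _ 2], rule allI)
      fix x :: "'a \<times> 'a"
      have "cplx_norm (T x) \<le> norm (fst x + snd x) + norm (A (snd x) - A (fst x))"
        unfolding T_def by (rule cplx_bound)
      also have "\<dots> \<le> (norm (fst x) + norm (snd x)) + (norm (snd x) + norm (fst x))"
        by (intro add_mono norm_triangle_ineq order_trans[OF norm_triangle_ineq4]) (use nA in auto)
      finally show "cplx_norm (T x) \<le> 2 * sum_norm x" by (simp add: sum_norm_def)
    qed
    show "\<forall>x. T (diag_op A x) = N_op (T x)"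
      by (simp add: T_def diag_op_def N_op_def AA Aminus)
  qed
  show ?thesis using part1 part2 by blast
qed

end
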